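(* Let $n\ge 2$ and $q\ge1$ be integers and let $S\subset Q_{q*}^n$ be an $A(n,q,n-1,n-2)$ design. Let $V\subset Q_{q*}^{2n}$ be the set of all concatenations $(s,x)$ with $s\in S$, $x\in Q_q^n$, together with all concatenations $(x,s)$ with $x\in Q_q^n$, $s\in S$. Then $V$ is an $A(2n,q,2n-1,2n-2)$ design.
   Context: For an integer $q\ge1$, $Q_q=\{0,1,\dots,q-1\}$ and $Q_{q*}=Q_q\cup\{*\}$. The weight of a word $u\in Q_{q*}^n$ is $n$ minus the number of $*$ symbols in $u$. For $u,v\in Q_{q*}^n$ we say $u$ extends $v$ if $u_i=v_i$ for every position $i$ with $v_i\neq *$. For integers $n\ge w\ge t\ge 1$, an $A(n,q,w,t)$ design is a set $S$ of words of weight $t$ in $Q_{q*}^n$ such that every word of weight $w$ in $Q_{q*}^n$ extends exactly one element of $S$. *)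

theory Defs
  imports Main
begin

text \<open>Words in Q_{q*}^n are lists of length n over nat option; None is the star symbol,
  Some a with a < q is a symbol of Q_q.\<close>

definition words :: "nat \<Rightarrow> nat \<Rightarrow> nat option list set" where
  "words q n = {u. length u = n \<and> (\<forall>i<n. \<forall>a. u ! i = Some a \<longrightarrow> a < q)}"

definition full_words :: "nat \<Rightarrow> nat \<Rightarrow> nat option list set" where
  "full_words q n = {u \<in> words q n. \<forall>i<n. u ! i \<noteq> None}"

definition weight :: "nat option list \<Rightarrow> nat" where
  "weight u = length u - card {i. i < length u \<and> u ! i = None}"

definition extends :: "nat option list \<Rightarrow> nat option list \<Rightarrow> bool" where
  "extends u v \<longleftrightarrow> length u = length v \<and> (\<forall>i<length v. v ! i \<noteq> None \<longrightarrow> u ! i = v ! i)"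

definition is_design :: "nat \<Rightarrow> nat \<Rightarrow> nat \<Rightarrow> nat \<Rightarrow> nat option list set \<Rightarrow> bool" where
  "is_design n q w t S \<longleftrightarrow>
     S \<subseteq> {u \<in> words q n. weight u = t} \<and>
     (\<forall>u \<in> words q n. weight u = w \<longrightarrow> (\<exists>!s. s \<in> S \<and> extends u s))"

end

theory Submission
  imports Defs
begin

lemma weight_alt: "weight u = length (filter (\<lambda>x. x \<noteq> None) u)"
  unfolding weight_def
  using length_filter_conv_card[of "\<lambda>x. x = None" u]
        sum_length_filter_compl[of "\<lambda>x. x = None" u] by simp

lemma weight_append: "weight (a @ b) = weight a + weight b"
  by (simp add: weight_alt)

lemma weight_le: "weight u \<le> length u"
  by (simp add: weight_alt)

lemma weight_full: "weight u = length u \<longleftrightarrow> (\<forall>i<length u. u ! i \<noteq> None)"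
proof -
  have "weight u = length u \<longleftrightarrow> (\<forall>x\<in>set u. x \<noteq> None)"
    unfolding weight_alt
  proof
    assume "length (filter (\<lambda>x. x \<noteq> None) u) = length u"
    thus "\<forall>x\<in>set u. x \<noteq> None"
      using length_filter_less[of _ u "\<lambda>x. x \<noteq> None"] by fastforce
  next
    assume "\<forall>x\<in>set u. x \<noteq> None"
    thus "length (filter (\<lambda>x. x \<noteq> None) u) = length u"
      by (simp add: filter_id_conv)
  qed
  then show ?thesis by (auto simp: in_set_conv_nth)
qed

lemma words_take: "u \<in> words q (m + n) \<Longrightarrow> take m u \<in> words q m"
  apply (auto simp: words_def) by (meson trans_less_add1)

lemma words_drop: "u \<in> words q (m + n) \<Longrightarrow> drop m u \<in> words q n"
  apply (auto simp: words_def) by (metis add_less_cancel_left)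

lemma words_append: "a \<in> words q m \<Longrightarrow> b \<in> words q n \<Longrightarrow> a @ b \<in> words q (m + n)"
  unfolding words_def
  apply (auto simp: nth_append split: if_splits)
  by (metis add_diff_inverse_nat nat_add_left_cancel_less)

lemma extends_append:
  assumes "length a = length c"
  shows "extends (a @ b) (c @ d) \<longleftrightarrow> extends a c \<and> extends b d"
proof
  assume h: "extends (a @ b) (c @ d)"
  hence l: "length b = length d" using assms by (simp add: extends_def)
  have "extends a c" unfolding extends_def
  proof (intro conjI allI impI)
    fix i assume "i < length c" "c ! i \<noteq> None"
    have hh: "\<forall>i<length (c@d). (c@d)!i \<noteq> None \<longrightarrow> (a@b)!i = (c@d)!i"
      using h by (simp add: extends_def)
    have "(a @ b) ! i = (c @ d) ! i"
      using hh \<open>i < length c\<close> \<open>c ! i \<noteq> None\<close> by (simp add: nth_append)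
    thus "a ! i = c ! i" using \<open>i < length c\<close> assms by (simp add: nth_append)
  qed (use assms in simp)
  moreover have "extends b d" unfolding extends_def
  proof (intro conjI allI impI)
    fix i assume i: "i < length d" "d ! i \<noteq> None"
    have hh2: "\<forall>i<length (c@d). (c@d)!i \<noteq> None \<longrightarrow> (a@b)!i = (c@d)!i"
      using h by (simp add: extends_def)
    have "(a @ b) ! (length c + i) = (c @ d) ! (length c + i)"
      using hh2[rule_format, of "length c + i"] i by (simp add: nth_append)
    thus "b ! i = d ! i" using assms by (simp add: nth_append)
  qed (use l in simp)
  ultimately show "extends a c \<and> extends b d" by simp
next
  assume "extends a c \<and> extends b d"
  thus "extends (a @ b) (c @ d)" using assms
    unfolding extends_def by (auto simp: nth_append)
qed

lemma extends_full:
  assumes "extends b x" "\<forall>i<length x. x ! i \<noteq> None"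
  shows "b = x"
  using assms unfolding extends_def by (auto intro: nth_equalityI)

lemma extends_refl: "extends u u"
  by (simp add: extends_def)

lemma full_words_weight: "x \<in> full_words q n \<longleftrightarrow> x \<in> words q n \<and> weight x = n"
  unfolding full_words_def words_def using weight_full by auto

theorem proposition4:
  fixes n q :: nat and S :: "nat option list set"
  assumes "n \<ge> 2" and "q \<ge> 1"
    and "is_design n q (n - 1) (n - 2) S"
  shows "is_design (2 * n) q (2 * n - 1) (2 * n - 2)
           ({s @ x | s x. s \<in> S \<and> x \<in> full_words q n} \<union>
            {x @ s | x s. x \<in> full_words q n \<and> s \<in> S})"
proof -
  have Sw: "\<And>s. s \<in> S \<Longrightarrow> s \<in> words q n \<and> weight s = n - 2"
    and Su: "\<And>u. u \<in> words q n \<Longrightarrow> weight u = n - 1 \<Longrightarrow> \<exists>!s. s \<in> S \<and> extends u s"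
    using assms(3) unfolding is_design_def by auto
  have len: "\<And>u m. u \<in> words q m \<Longrightarrow> length u = m" by (simp add: words_def)
  let ?V = "{s @ x | s x. s \<in> S \<and> x \<in> full_words q n} \<union>
            {x @ s | x s. x \<in> full_words q n \<and> s \<in> S}"
  have sub: "?V \<subseteq> {u \<in> words q (2 * n). weight u = 2 * n - 2}"
  proof
    fix v assume "v \<in> ?V"
    then consider s x where "s \<in> S" "x \<in> full_words q n" "v = s @ x"
      | s x where "s \<in> S" "x \<in> full_words q n" "v = x @ s" by blast
    then show "v \<in> {u \<in> words q (2 * n). weight u = 2 * n - 2}"
    proof cases
      case 1
      then show ?thesis using Sw[OF 1(1)] full_words_weight[of x q n] words_append[of s q n x n] assms(1)
        by (auto simp: weight_append mult_2)
    next
      case 2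
      then show ?thesis using Sw[OF 2(1)] full_words_weight[of x q n] words_append[of x q n s n] assms(1)
        by (auto simp: weight_append mult_2)
    qed
  qed
  have ex: "\<exists>!v. v \<in> ?V \<and> extends u v"
    if u: "u \<in> words q (2 * n)" "weight u = 2 * n - 1" for u
  proof -
    define a where "a = take n u"
    define b where "b = drop n u"
    have uab: "u = a @ b" by (simp add: a_def b_def)
    have a: "a \<in> words q n" and b: "b \<in> words q n"
      using words_take[of u q n n] words_drop[of u q n n] u by (auto simp: a_def b_def mult_2)
    have la: "length a = n" and lb: "length b = n" using len a b by auto
    have wsum: "weight a + weight b = 2 * n - 1" using u uab weight_append by simp
    have wa: "weight a \<le> n" and wb: "weight b \<le> n" using weight_le la lb by metis+
    have fwD: "\<And>x. x \<in> full_words q n \<Longrightarrow> length x = n \<and> (\<forall>i<length x. x ! i \<noteq> None)"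
      by (simp add: full_words_def words_def)
    have eqb: "\<And>x. x \<in> full_words q n \<Longrightarrow> extends b x \<Longrightarrow> b = x"
      using extends_full fwD by blast
    have eqa: "\<And>x. x \<in> full_words q n \<Longrightarrow> extends a x \<Longrightarrow> a = x"
      using extends_full fwD by blast
    have nfull: "\<And>x. x \<in> full_words q n \<Longrightarrow> extends a x \<Longrightarrow> weight a = n"
      using eqa full_words_weight by blast
    have nfullb: "\<And>x. x \<in> full_words q n \<Longrightarrow> extends b x \<Longrightarrow> weight b = n"
      using eqb full_words_weight by blast
    have lS: "\<And>s. s \<in> S \<Longrightarrow> length s = n" using Sw len by blast
    have lF: "\<And>x. x \<in> full_words q n \<Longrightarrow> length x = n" using len full_words_def by auto
    show ?thesis
    proof (cases "weight a = n - 1")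
      case True
      hence wbn: "weight b = n" using wsum assms(1) by simp
      hence bF: "b \<in> full_words q n" using full_words_weight b by blast
      obtain s where s: "s \<in> S" "extends a s" and su: "\<And>t. t \<in> S \<Longrightarrow> extends a t \<Longrightarrow> t = s"
        using Su[OF a True] by blast
      show ?thesis
      proof (rule ex1I[of _ "s @ b"])
        show "s @ b \<in> ?V \<and> extends u (s @ b)"
        proof
          show "s @ b \<in> ?V" by (rule UnI1) (use s(1) bF in blast)
          show "extends u (s @ b)" unfolding uab
            using extends_append[of a s b b] la lS[OF s(1)] s(2) extends_refl[of b] by simp
        qed
      next
        fix v assume v: "v \<in> ?V \<and> extends u v"
        then consider s' x where "s' \<in> S" "x \<in> full_words q n" "v = s' @ x"
          | s' x where "s' \<in> S" "x \<in> full_words q n" "v = x @ s'" by blast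
        then show "v = s @ b"
        proof cases
          case 1
          then have "extends a s' \<and> extends b x"
            using v uab extends_append[of a s' b x] la lS[OF 1(1)] 1(3) by simp
          then have "s' = s" and "b = x" using su[OF 1(1)] eqb[OF 1(2)] by auto
          then show ?thesis using 1(3) by simp
        next
          case 2
          then have "extends a x"
            using v uab extends_append[of a x b s'] la lF[OF 2(2)] 2(3) by simp
          then have "weight a = n" using nfull 2 by blast
          then show ?thesis using True assms(1) by simp
        qed
      qed
    next
      case False
      hence wan: "weight a = n" and wb1: "weight b = n - 1" using wsum wa wb assms(1) by auto
      hence aF: "a \<in> full_words q n" using full_words_weight a by blast
      obtain s where s: "s \<in> S" "extends b s" and su: "\<And>t. t \<in> S \<Longrightarrow> extends b t \<Longrightarrow> t = s"
        using Su[OF b wb1] by blast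
      show ?thesis
      proof (rule ex1I[of _ "a @ s"])
        show "a @ s \<in> ?V \<and> extends u (a @ s)"
        proof
          show "a @ s \<in> ?V" by (rule UnI2) (use s(1) aF in blast)
          show "extends u (a @ s)" unfolding uab
            using extends_append[of a a b s] s(2) extends_refl[of a] by simp
        qed
      next
        fix v assume v: "v \<in> ?V \<and> extends u v"
        then consider s' x where "s' \<in> S" "x \<in> full_words q n" "v = s' @ x"
          | s' x where "s' \<in> S" "x \<in> full_words q n" "v = x @ s'" by blast
        then show "v = a @ s"
        proof cases
          case 2
          then have "extends a x \<and> extends b s'"
            using v uab extends_append[of a x b s'] la lF[OF 2(2)] 2(3) by simp
          then have "s' = s" and "a = x" using su[OF 2(1)] eqa[OF 2(2)] by auto
          then show ?thesis using 2(3) by simp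
        next
          case 1
          then have "extends b x"
            using v uab extends_append[of a s' b x] la lS[OF 1(1)] 1(3) by simp
          then have "weight b = n" using nfullb 1 by blast
          then show ?thesis using wb1 assms(1) by simp
        qed
      qed
    qed
  qed
  show ?thesis unfolding is_design_def
  proof (intro conjI ballI impI)
    show "?V \<subseteq> {u \<in> words q (2 * n). weight u = 2 * n - 2}" by (rule sub)
  next
    fix u assume "u \<in> words q (2 * n)" "weight u = 2 * n - 1"
    then show "\<exists>!v. v \<in> ?V \<and> extends u v" by (rule ex)
  qed
qed

end
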